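(* $\mathcal A/\mathcal A_1\cong\mathbb Z_2$, and for all integers $n\ge1$, $$\mathcal A_{2n-1}/\mathcal A_{2n+1}\cong\mathbb Z_2\times\mathbb Z_2.$$
   Context: Over $\mathbb F_2$, the Appell subgroup $\mathcal A$ of the Riordan group is the abelian group of Riordan arrays $(g,t)$ with $g\in\mathbb F_2[[t]]$, $g(0)=1$, with product $(g_1,t)(g_2,t)=(g_1g_2,t)$. For $n\ge0$, $\mathcal A_n=\{(g,t)\in\mathcal A: g\equiv 1\pmod{t^{n+1}}\}$, i.e. $g=1+\alpha_{n+1}t^{n+1}+\alpha_{n+2}t^{n+2}+\cdots$. $\mathbb Z_2=\mathbb Z/2\mathbb Z$. *)

theory Defs
  imports "HOL-Algebra.Algebra" "HOL-Computational_Algebra.Formal_Power_Series" "HOL-Library.Z2"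
begin

text \<open>The Appell subgroup of the Riordan group over F_2: an element (g,t) is identified
  with its power series g in F_2[[t]] with g(0) = 1; the product is (g1 g2, t).\<close>

definition appell :: "bit fps monoid" where
  "appell = \<lparr> carrier = {g. fps_nth g 0 = 1}, monoid.mult = (\<lambda>g h. g * h), one = 1 \<rparr>"

definition appell_sub :: "nat \<Rightarrow> bit fps set" where
  "appell_sub n = {g \<in> carrier appell. \<forall>k\<in>{1..n}. fps_nth g k = 0}"

end

theory Submission
  imports Defs
begin

unbundle fps_syntax

declare add_bit_eq_xor[simp del] mult_bit_eq_and[simp del]

lemma appell_simps [simp]: "carrier appell = {g. fps_nth g 0 = 1}"
  "monoid.mult appell = (\<lambda>g h. g * h)" "one appell = 1"
  by (simp_all add: appell_def)

lemma group_appell: "group appell"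
proof (rule groupI)
  fix x assume x: "x \<in> carrier appell"
  then have "x $ 0 \<noteq> 0" by simp
  then show "\<exists>y\<in>carrier appell. y \<otimes>\<^bsub>appell\<^esub> x = \<one>\<^bsub>appell\<^esub>"
    using x by (intro bexI[of _ "inverse x"]) (auto simp: inverse_mult_eq_1)
qed (auto simp: mult.assoc)

lemma inv_appell: "x \<in> carrier appell \<Longrightarrow> inv\<^bsub>appell\<^esub> x = inverse x"
  by (rule group.inv_equality[OF group_appell]) (auto simp: inverse_mult_eq_1)

lemma mult_low:
  fixes f g :: "bit fps"
  assumes "f $ 0 = 1" "g $ 0 = 1" "\<forall>j\<in>{1..m}. f $ j = 0" "\<forall>j\<in>{1..m}. g $ j = 0"
    "1 \<le> k" "k \<le> 2*m+1"
  shows "(f*g) $ k = f $ k + g $ k"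
proof -
  have "(f*g) $ k = (\<Sum>i\<in>{0..k}. f$i * g$(k-i))" by (simp add: fps_mult_nth)
  also have "\<dots> = (\<Sum>i\<in>{0,k}. f$i * g$(k-i))"
  proof (rule sum.mono_neutral_right)
    show "\<forall>i\<in>{0..k} - {0, k}. f $ i * g $ (k - i) = 0"
    proof
      fix i assume i: "i \<in> {0..k} - {0, k}"
      show "f $ i * g $ (k - i) = 0"
      proof (cases "i \<le> m")
        case True then show ?thesis using i assms(3) by auto
      next
        case False
        then have "k - i \<in> {1..m}" using i assms(6) by auto
        then show ?thesis using assms(4) by auto
      qed
    qed
  qed (use assms in auto)
  also have "\<dots> = f $ 0 * g $ k + f $ k * g $ (k - k)"
    using assms(5) by (subst sum.insert) auto
  also have "\<dots> = f $ k + g $ k" using assms by (simp add: add.commute)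
  finally show ?thesis .
qed

lemma inv_low:
  fixes g :: "bit fps"
  assumes "g $ 0 = 1" "\<forall>j\<in>{1..m}. g $ j = 0" "k \<in> {1..m}"
  shows "inverse g $ k = 0"
proof -
  have "0 = (g * inverse g) $ k" using assms by (simp add: inverse_mult_eq_1')
  also have "\<dots> = (\<Sum>i\<in>{0..k}. g$i * inverse g$(k-i))" by (simp add: fps_mult_nth)
  also have "\<dots> = (\<Sum>i\<in>{0}. g$i * inverse g$(k-i))"
    by (rule sum.mono_neutral_right) (use assms in auto)
  also have "\<dots> = inverse g $ k" using assms by simp
  finally show ?thesis by simp
qed

lemma subgroup_appell_sub: "subgroup (appell_sub m) appell"
proof
  show "appell_sub m \<subseteq> carrier appell" by (auto simp: appell_sub_def)
  show "\<one>\<^bsub>appell\<^esub> \<in> appell_sub m" by (auto simp: appell_sub_def)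
next
  fix x y assume x: "x \<in> appell_sub m" and y: "y \<in> appell_sub m"
  have x0: "x $ 0 = 1" and y0: "y $ 0 = 1" using x y by (auto simp: appell_sub_def)
  have "(x*y) $ k = 0" if "k \<in> {1..m}" for k
    using mult_low[of x y m k] x y that by (auto simp: appell_sub_def)
  moreover have "(x*y) $ 0 = 1" using x0 y0 by simp
  ultimately show "x \<otimes>\<^bsub>appell\<^esub> y \<in> appell_sub m" by (auto simp: appell_sub_def)
next
  fix x assume x: "x \<in> appell_sub m"
  have x0: "x $ 0 = 1" using x by (auto simp: appell_sub_def)
  have "inverse x $ k = 0" if "k \<in> {1..m}" for k
    using inv_low[of x m k] x that by (auto simp: appell_sub_def)
  moreover have "inverse x $ 0 = 1" using x0 by simp
  ultimately show "inv\<^bsub>appell\<^esub> x \<in> appell_sub m" using x x0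
    by (auto simp: appell_sub_def inv_appell)
qed

definition bi :: "bit \<Rightarrow> int" where "bi b = (if b = 0 then 0 else 1)"

lemma bi_add: "bi (a + b) = (bi a + bi b) mod 2"
  by (cases a; cases b) (auto simp: bi_def add_bit_eq_xor)

lemma bi_range: "bi a \<in> {0..<2}" by (auto simp: bi_def)

lemma bi_surj: "x \<in> {0..<2::int} \<Longrightarrow> bi (if x = 0 then 0 else 1) = x"
  by (auto simp: bi_def)

theorem corollary6:
  shows "appell Mod appell_sub 1 \<cong> integer_mod_group 2 \<and>
         (\<forall>n::nat. n \<ge> 1 \<longrightarrow>
           (appell\<lparr>carrier := appell_sub (2*n-1)\<rparr>) Mod appell_sub (2*n+1)
             \<cong> integer_mod_group 2 \<times>\<times> integer_mod_group 2)"
proof (intro conjI allI impI)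
  define h where "h = (\<lambda>g::bit fps. bi (g $ 1))"
  have gh: "group_hom appell (integer_mod_group 2) h"
  proof (intro group_hom.intro group_hom_axioms.intro group_appell group_integer_mod_group homI)
    fix x assume "x \<in> carrier appell"
    then show "h x \<in> carrier (integer_mod_group 2)"
      using bi_range by (simp add: h_def carrier_integer_mod_group)
  next
    fix x y assume x: "x \<in> carrier appell" and y: "y \<in> carrier appell"
    have "(x*y) $ 1 = x $ 1 + y $ 1" using mult_low[of x y 0 1] x y by simp
    then have "h (x * y) = (h x + h y) mod 2" unfolding h_def by (simp only: bi_add)
    then show "h (x \<otimes>\<^bsub>appell\<^esub> y) = h x \<otimes>\<^bsub>integer_mod_group 2\<^esub> h y"
      by simp
  qed
  have ker: "kernel appell (integer_mod_group 2) h = appell_sub 1"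
    by (auto simp: kernel_def appell_sub_def h_def bi_def)
  have surj: "h ` carrier appell = carrier (integer_mod_group 2)"
  proof
    show "h ` carrier appell \<subseteq> carrier (integer_mod_group 2)"
      using bi_range by (auto simp: h_def carrier_integer_mod_group)
    show "carrier (integer_mod_group 2) \<subseteq> h ` carrier appell"
    proof
      fix x assume x: "x \<in> carrier (integer_mod_group 2)"
      let ?g = "Abs_fps (\<lambda>k. if k = 0 then 1 else if k = 1 then (if x = 0 then 0 else 1) else (0::bit))"
      have e1: "h ?g = x" using x bi_surj[of x] by (simp add: h_def carrier_integer_mod_group)
      have e2: "?g \<in> carrier appell" by simp
      show "x \<in> h ` carrier appell" by (rule image_eqI[where f=h, OF e1[symmetric] e2])
    qed
  qed
  have "appell Mod kernel appell (integer_mod_group 2) h \<cong> integer_mod_group 2"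
    by (rule group_hom.FactGroup_iso[OF gh surj])
  then show "appell Mod appell_sub 1 \<cong> integer_mod_group 2"
    unfolding ker .
next
  fix n :: nat assume n: "n \<ge> 1"
  define G where "G = appell\<lparr>carrier := appell_sub (2*n-1)\<rparr>"
  define H where "H = integer_mod_group 2 \<times>\<times> integer_mod_group 2"
  define h where "h = (\<lambda>g::bit fps. (bi (g $ (2*n)), bi (g $ (2*n+1))))"
  have grpG: "group G" unfolding G_def
    by (rule group.subgroup_imp_group[OF group_appell subgroup_appell_sub])
  have gh: "group_hom G H h"
  proof (intro group_hom.intro group_hom_axioms.intro grpG homI)
    show "group H" unfolding H_def by (intro DirProd_group group_integer_mod_group)
  next
    fix x assume "x \<in> carrier G"
    then show "h x \<in> carrier H"
      using bi_range by (simp add: h_def H_def carrier_integer_mod_group)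
  next
    fix x y assume x: "x \<in> carrier G" and y: "y \<in> carrier G"
    have x': "x $ 0 = 1" "\<forall>j\<in>{1..2*n-1}. x $ j = 0" and y': "y $ 0 = 1" "\<forall>j\<in>{1..2*n-1}. y $ j = 0"
      using x y by (auto simp: G_def appell_sub_def)
    have "(x*y) $ (2*n) = x $ (2*n) + y $ (2*n)" using mult_low[OF x'(1) y'(1) x'(2) y'(2), of "2*n"] n by simp
    moreover have "(x*y) $ (2*n+1) = x $ (2*n+1) + y $ (2*n+1)" using mult_low[OF x'(1) y'(1) x'(2) y'(2), of "2*n+1"] n by simp
    ultimately have "h (x * y) = ((bi (x $ (2*n)) + bi (y $ (2*n))) mod 2,
        (bi (x $ (2*n+1)) + bi (y $ (2*n+1))) mod 2)" unfolding h_def by (simp only: bi_add)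
    then show "h (x \<otimes>\<^bsub>G\<^esub> y) = h x \<otimes>\<^bsub>H\<^esub> h y"
      by (simp add: h_def G_def H_def)
  qed
  have ker: "kernel G H h = appell_sub (2*n+1)"
  proof -
    have "g \<in> kernel G H h \<longleftrightarrow> g \<in> appell_sub (2*n+1)" for g
    proof -
      have "(\<forall>k\<in>{1..2*n+1}. g $ k = 0) \<longleftrightarrow>
            (\<forall>k\<in>{1..2*n-1}. g $ k = 0) \<and> g $ (2*n) = 0 \<and> g $ (2*n+1) = 0"
      proof -
        have "{1..2*n+1} = {1..2*n-1} \<union> {2*n, 2*n+1}" using n by auto
        then show ?thesis by auto
      qed
      then show ?thesis
        by (auto simp: kernel_def appell_sub_def h_def bi_def G_def H_def)
    qed
    then show ?thesis by blast
  qed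
  have surj: "h ` carrier G = carrier H"
  proof
    show "h ` carrier G \<subseteq> carrier H"
      using bi_range by (auto simp: h_def H_def carrier_integer_mod_group)
    show "carrier H \<subseteq> h ` carrier G"
    proof
      fix p assume p: "p \<in> carrier H"
      obtain x y where xy: "p = (x, y)" "x \<in> {0..<2}" "y \<in> {0..<2}"
        using p by (auto simp: H_def carrier_integer_mod_group)
      let ?g = "Abs_fps (\<lambda>k. if k = 0 then 1 else if k = 2*n then (if x = 0 then 0 else 1)
                   else if k = 2*n+1 then (if y = 0 then 0 else 1) else (0::bit))"
      have e1: "h ?g = p" using xy bi_surj[of x] bi_surj[of y] n by (simp add: h_def)
      have e2: "?g \<in> carrier G" using n by (auto simp: G_def appell_sub_def)
      show "p \<in> h ` carrier G" by (rule image_eqI[where f=h, OF e1[symmetric] e2])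
    qed
  qed
  show "(appell\<lparr>carrier := appell_sub (2*n-1)\<rparr>) Mod appell_sub (2*n+1)
             \<cong> integer_mod_group 2 \<times>\<times> integer_mod_group 2"
  proof -
    have "G Mod kernel G H h \<cong> H"
      by (rule group_hom.FactGroup_iso[OF gh surj])
    then show ?thesis unfolding ker by (simp only: G_def H_def)
  qed
qed

end
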